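(* A numerical semigroup $G$ is a $2$-permutation numerical semigroup if and only if $G$ is one of $$G_1=\langle 1,2\rangle=\mathbb{N},\qquad G_2=\langle 2,3\rangle=\{0\}\cup\{x\in\mathbb{N}: x\ge 2\},\qquad G_3=\langle 3,4\rangle=\{0,3,4\}\cup\{x\in\mathbb{N}:x\ge 6\}.$$
   Context: $\mathbb{N}=\{0,1,2,\dots\}$. A numerical semigroup is a submonoid $G$ of $(\mathbb{N},+,0)$ such that $\mathbb{N}\setminus G$ is finite; $\langle S\rangle$ denotes the submonoid of $\mathbb{N}$ generated by $S$. Write the elements of $G$ as $0=g_0<g_1<g_2<\cdots$. For a positive integer $n$, $G$ is called an $n$-permutation numerical semigroup if $G=\langle\{g_1,\dots,g_n\}\rangle$ and, for every $k\in\mathbb{N}$, the $n$-tuple $(g_{kn+1}\bmod n,\dots,g_{kn+n}\bmod n)$ contains exactly one representative of each residue class of $\mathbb{Z}/n\mathbb{Z}$. *)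

theory Defs
  imports Main "HOL-Library.Infinite_Set"
begin

inductive_set gen :: "nat set \<Rightarrow> nat set" for S :: "nat set" where
  gen_zero: "0 \<in> gen S"
| gen_add: "s \<in> S \<Longrightarrow> x \<in> gen S \<Longrightarrow> s + x \<in> gen S"

definition numerical_semigroup :: "nat set \<Rightarrow> bool" where
  "numerical_semigroup G \<longleftrightarrow>
     0 \<in> G \<and> (\<forall>x\<in>G. \<forall>y\<in>G. x + y \<in> G) \<and> finite (UNIV - G)"

text \<open>The i-th element g_i of G in increasing order (g_0 = 0).\<close>
definition elem :: "nat set \<Rightarrow> nat \<Rightarrow> nat" where
  "elem G i = enumerate G i"

definition perm_numerical_semigroup :: "nat \<Rightarrow> nat set \<Rightarrow> bool" where
  "perm_numerical_semigroup n G \<longleftrightarrow>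
     numerical_semigroup G \<and>
     G = gen (elem G ` {1..n}) \<and>
     (\<forall>k. bij_betw (\<lambda>i. elem G (k * n + i) mod n) {1..n} {0..<n})"

end

theory Submission imports Defs begin

lemma gen_char: "x \<in> gen {a,b} \<longleftrightarrow> (\<exists>i j. x = i*a + j*b)"
proof
  assume "x \<in> gen {a,b}" then show "\<exists>i j. x = i*a + j*b"
  proof (induction rule: gen.induct)
    case gen_zero then show ?case by (intro exI[of _ 0]) simp
  next
    case (gen_add s x)
    then obtain i j where "x = i*a+j*b" by blast
    from gen_add(1) have "s = a \<or> s = b" by simp
    then show ?case
    proof
      assume "s = a" then show ?case using \<open>x = i*a+j*b\<close> by (intro exI[of _ "Suc i"] exI[of _ j]) simp
    next
      assume "s = b" then show ?case using \<open>x = i*a+j*b\<close> by (intro exI[of _ i] exI[of _ "Suc j"]) simp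
    qed
  qed
next
  assume "\<exists>i j. x = i*a + j*b"
  then obtain i j where x: "x = i*a+j*b" by blast
  have "j*b \<in> gen {a,b}"
    by (induction j) (auto intro: gen.intros simp: add.commute)
  then have "i*a + j*b \<in> gen {a,b}"
    by (induction i) (auto simp: add.assoc intro: gen.intros)
  with x show "x \<in> gen {a,b}" by simp
qed

lemma mem: "i*a + j*b \<in> gen {a,b}" using gen_char by blast

lemma all4: "(\<forall>i j. i+j\<le>(4::nat) \<longrightarrow> P i j) \<longleftrightarrow>
  (P 0 0 \<and> P 0 1 \<and> P 0 2 \<and> P 0 3 \<and> P 0 4 \<and> P 1 0 \<and> P 1 1 \<and> P 1 2 \<and> P 1 3 \<and>
   P 2 0 \<and> P 2 1 \<and> P 2 2 \<and> P 3 0 \<and> P 3 1 \<and> P 4 0)"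
proof safe
  fix i j :: nat assume H: "P 0 0" "P 0 1" "P 0 2" "P 0 3" "P 0 4" "P 1 0" "P 1 1" "P 1 2" "P 1 3"
   "P 2 0" "P 2 1" "P 2 2" "P 3 0" "P 3 1" "P 4 0" "i + j \<le> 4"
  have "i \<le> 4" using H by simp
  then have "i = 0 \<or> i = 1 \<or> i = 2 \<or> i = 3 \<or> i = 4" by auto
  moreover have "j \<le> 4 - i" using H by simp
  ultimately show "P i j" using H
    by (auto simp: le_Suc_eq numeral_eq_Suc)
qed auto

lemma enum_next:
  assumes "infinite S" "v \<in> S" "enumerate S n < v" "\<forall>y\<in>S. enumerate S n < y \<longrightarrow> v \<le> y"
  shows "enumerate S (Suc n) = v"
  unfolding enumerate_Suc''[OF assms(1)]
  by (rule Least_equality) (use assms in auto)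

lemma enum_between:
  assumes "infinite S" "y \<in> S" "enumerate S n < y"
  shows "enumerate S (Suc n) \<le> y"
  unfolding enumerate_Suc''[OF assms(1)]
  by (rule Least_le) (use assms in auto)

lemma gen_next:
  assumes m: "m = Suc n" and inf: "infinite (gen {a,b})" and ab: "a \<le> b" and x: "elem (gen {a,b}) n = x"
    and v: "v = p*a + q*b" "x < v" "v < 5*a"
    and H: "\<forall>i j. i+j \<le> 4 \<longrightarrow> x < i*a+j*b \<longrightarrow> v \<le> i*a+j*b"
  shows "elem (gen {a,b}) m = v"
  unfolding elem_def m
proof (rule enum_next[OF inf])
  show "v \<in> gen {a,b}" using v mem by simp
  show "enumerate (gen {a, b}) n < v" using x v elem_def by simp
  show "\<forall>y\<in>gen {a, b}. enumerate (gen {a, b}) n < y \<longrightarrow> v \<le> y"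
  proof (intro ballI impI)
    fix y assume "y \<in> gen {a,b}" "enumerate (gen {a, b}) n < y"
    then obtain i j where y: "y = i*a+j*b" "x < y" using gen_char x elem_def by metis
    show "v \<le> y"
    proof (cases "i + j \<le> 4")
      case True then show ?thesis using H y by blast
    next
      case False
      have "5*a \<le> (i+j)*a" using False by simp
      also have "\<dots> \<le> i*a+j*b" using ab by (simp add: distrib_right)
      finally show ?thesis using v y by simp
    qed
  qed
qed

lemma nodiv:
  assumes "numerical_semigroup (gen {a,b})" "(d::nat) \<ge> 2" "d dvd a" "d dvd b"
  shows False
proof -
  have D: "x \<in> gen {a,b} \<Longrightarrow> d dvd x" for x
    by (induction rule: gen.induct) (use assms in auto)
  have "finite (UNIV - gen {a,b})" using assms(1) numerical_semigroup_def by blast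
  then obtain m where m: "\<forall>n\<in>UNIV - gen {a,b}. n < m"
    using finite_nat_set_iff_bounded by blast
  have "m \<le> d*m" using assms(2) by simp
  then have "d*m+1 \<ge> m" by linarith
  then have "d*m+1 \<in> gen {a,b}" using m by (meson DiffI UNIV_I not_le)
  then have "d dvd d*m+1" using D by blast
  then have "d dvd 1" by (metis dvd_add_right_iff dvd_triv_left)
  then show False using assms(2) by simp
qed

lemma bij2: fixes f :: "nat \<Rightarrow> nat" shows "bij_betw (\<lambda>i. f (k*2+i) mod (2::nat)) {1..2} {0..<2} \<longleftrightarrow> f (k*2+1) mod 2 \<noteq> f (k*2+2) mod 2"
proof -
  have A: "{1..2::nat} = {1,2}" "{0..<2::nat} = {0,1}" by auto
  have I: "(\<lambda>i. f (k*2+i) mod (2::nat)) ` {1,2} = {f (k*2+1) mod 2, f (k*2+2) mod 2}" by simp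
  have In: "inj_on (\<lambda>i. f (k*2+i) mod (2::nat)) {1,2} \<longleftrightarrow> f (k*2+1) mod 2 \<noteq> f (k*2+2) mod 2"
    unfolding inj_on_def by auto
  have P: "p < 2 \<Longrightarrow> q < 2 \<Longrightarrow> p \<noteq> q \<Longrightarrow> {p,q} = {0,1::nat}" for p q :: nat
    by (cases p; cases q) auto
  show ?thesis
  proof
    assume "bij_betw (\<lambda>i. f (k*2+i) mod (2::nat)) {1..2} {0..<2}"
    then show "f (k*2+1) mod 2 \<noteq> f (k*2+2) mod 2" unfolding A bij_betw_def In by blast
  next
    assume h: "f (k*2+1) mod 2 \<noteq> f (k*2+2) mod 2"
    have "{f (k*2+1) mod 2, f (k*2+2) mod 2} = {0,1}" by (rule P, simp, simp, rule h)
    then show "bij_betw (\<lambda>i. f (k*2+i) mod (2::nat)) {1..2} {0..<2}"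
      unfolding A bij_betw_def In I using h by simp
  qed
qed

lemma G1: "gen {1,2} = UNIV"
proof -
  have "x \<in> gen {1,2}" for x using mem[of x 1 0 2] by simp
  then show ?thesis by blast
qed

lemma G2: "gen {2,3} = UNIV - {1}"
proof -
  have "x \<in> gen {2,3} \<longleftrightarrow> x \<noteq> 1" for x
  proof -
    have "(\<exists>i j. x = i*2 + j*(3::nat)) \<longleftrightarrow> x \<noteq> 1"
    proof
      assume "\<exists>i j. x = i*2 + j*(3::nat)"
      then obtain i j where "x = i*2 + j*(3::nat)" by blast
      then show "x \<noteq> 1" by presburger
    next
      assume "x \<noteq> 1"
      show "\<exists>i j. x = i*2 + j*(3::nat)"
      proof (cases "even x")
        case True then show ?thesis by (intro exI[of _ "x div 2"] exI[of _ 0]) auto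
      next
        case False
        then have "x = ((x - 3) div 2)*2 + 1*3" using \<open>x \<noteq> 1\<close> by presburger
        then show ?thesis by blast
      qed
    qed
    then show ?thesis using gen_char by simp
  qed
  then show ?thesis by auto
qed

lemma G3: "gen {3,4} = UNIV - {1,2,5}"
proof -
  have "x \<in> gen {3,4} \<longleftrightarrow> x \<notin> {1,2,5}" for x
  proof -
    have "(\<exists>i j. x = i*3 + j*(4::nat)) \<longleftrightarrow> x \<notin> {1,2,5}"
    proof
      assume "\<exists>i j. x = i*3 + j*(4::nat)"
      then obtain i j where "x = i*3 + j*(4::nat)" by blast
      then have "x \<noteq> 1 \<and> x \<noteq> 2 \<and> x \<noteq> 5" by presburger
      then show "x \<notin> {1,2,5}" by simp
    next
      assume "x \<notin> {1,2,5}"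
      then have "x \<noteq> 1 \<and> x \<noteq> 2 \<and> x \<noteq> 5" by simp
      have "x mod 3 = 0 \<or> x mod 3 = 1 \<or> x mod 3 = 2" by auto
      then show "\<exists>i j. x = i*3 + j*(4::nat)"
      proof (elim disjE)
        assume "x mod 3 = 0" then have "x = (x div 3)*3 + 0*4" by auto
        then show ?thesis by blast
      next
        assume h: "x mod 3 = 1" then have "x \<ge> 4" using \<open>x \<noteq> 1 \<and> x \<noteq> 2 \<and> x \<noteq> 5\<close> by presburger
        then have "x = ((x - 4) div 3)*3 + 1*4" using h by presburger
        then show ?thesis by blast
      next
        assume h: "x mod 3 = 2" then have "x \<ge> 8" using \<open>x \<noteq> 1 \<and> x \<noteq> 2 \<and> x \<noteq> 5\<close> by presburger
        then have "x = ((x - 8) div 3)*3 + 2*4" using h by presburger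
        then show ?thesis by blast
      qed
    qed
    then show ?thesis using gen_char by simp
  qed
  then show ?thesis by auto
qed

lemma elem0: "0 \<in> S \<Longrightarrow> elem S 0 = 0"
  unfolding elem_def by (simp add: enumerate_0)

lemma E1: "elem UNIV n = n"
proof (induction n)
  case 0 then show ?case by (simp add: elem0)
next
  case (Suc n) then show ?case unfolding elem_def by (intro enum_next) auto
qed

lemma E2: "elem (UNIV - {1}) (Suc n) = n + 2"
proof (induction n)
  case 0 then show ?case using elem0[of "UNIV - {1}"] unfolding elem_def by (intro enum_next) auto
next
  case (Suc n) then show ?case unfolding elem_def by (intro enum_next) auto
qed

lemma E3a: "elem (UNIV - {1,2,5::nat}) 1 = 3" "elem (UNIV - {1,2,5::nat}) 2 = 4"
proof -
  have inf: "infinite (UNIV - {1,2,5::nat})" by simp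
  have e0: "elem (UNIV - {1,2,5::nat}) 0 = 0" by (simp add: elem0)
  have "enumerate (UNIV - {1,2,5::nat}) (Suc 0) = 3"
    by (rule enum_next[OF inf]) (use e0 elem_def in auto)
  then show e1: "elem (UNIV - {1,2,5::nat}) 1 = 3" by (simp add: elem_def)
  have "enumerate (UNIV - {1,2,5::nat}) (Suc 1) = 4"
    by (rule enum_next[OF inf]) (use e1 elem_def in auto)
  then show "elem (UNIV - {1,2,5::nat}) 2 = 4" by (simp add: elem_def numeral_2_eq_2)
qed

lemma E3: "elem (UNIV - {1,2,5::nat}) (n+3) = n + 6"
proof (induction n)
  case 0
  have inf: "infinite (UNIV - {1,2,5::nat})" by simp
  have "enumerate (UNIV - {1,2,5::nat}) (Suc 2) = 6"
    by (rule enum_next[OF inf]) (use E3a elem_def in auto)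
  then show ?case by (simp add: elem_def numeral_3_eq_3 numeral_2_eq_2)
next
  case (Suc n)
  have inf: "infinite (UNIV - {1,2,5::nat})" by simp
  have "enumerate (UNIV - {1,2,5::nat}) (Suc (n+3)) = Suc n + 6"
    by (rule enum_next[OF inf]) (use Suc elem_def in auto)
  then show ?case by (simp add: elem_def)
qed

lemma conv:
  assumes "numerical_semigroup G" "elem G 1 = p" "elem G 2 = q" "G = gen {p,q}"
    "\<And>k. elem G (k*2+1) mod 2 \<noteq> elem G (k*2+2) mod 2"
  shows "perm_numerical_semigroup 2 G"
proof -
  have "elem G ` {1..2} = {p,q}" using assms(2,3) by (simp add: atLeastAtMost_def atLeast_def atMost_def; auto simp: le_Suc_eq numeral_2_eq_2)
  then show ?thesis unfolding perm_numerical_semigroup_def using assms bij2[of "elem G"] by simp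
qed

lemma inf_ns: "numerical_semigroup G \<Longrightarrow> infinite G"
proof
  assume "numerical_semigroup G" "finite G"
  then have "finite (G \<union> (UNIV - G))" unfolding numerical_semigroup_def by blast
  then show False by simp
qed

theorem mainTheorem1:
  assumes "numerical_semigroup G"
  shows "perm_numerical_semigroup 2 G \<longleftrightarrow>
           G = gen {1, 2} \<or> G = gen {2, 3} \<or> G = gen {3, 4}"
proof
  assume P: "perm_numerical_semigroup 2 G"
  have inf: "infinite G" using inf_ns assms by blast
  have "{1..2::nat} = {1,2}" by auto
  then have Gg: "G = gen {elem G 1, elem G 2}" using P unfolding perm_numerical_semigroup_def by simp
  have par: "elem G (k*2+1) mod 2 \<noteq> elem G (k*2+2) mod 2" for k
    using P bij2[of "elem G" k] unfolding perm_numerical_semigroup_def by simp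
  define a where "a = elem G 1"
  define b where "b = elem G 2"
  have e0: "elem G 0 = 0" using assms elem0 numerical_semigroup_def by blast
  have "elem G 0 < elem G 1" "elem G 1 < elem G 2" using inf by (simp_all add: elem_def)
  then have a0: "0 < a" and ab: "a < b" using e0 a_def b_def by auto
  have GS: "G = gen {a,b}" using Gg a_def b_def by simp
  have infS: "infinite (gen {a,b})" using inf GS by simp
  have nsS: "numerical_semigroup (gen {a,b})" using assms GS by simp
  have e1: "elem (gen {a,b}) 1 = a" and e2: "elem (gen {a,b}) 2 = b" using GS a_def b_def by simp_all
  have parS: "elem (gen {a,b}) (k*2+1) mod 2 \<noteq> elem (gen {a,b}) (k*2+2) mod 2" for k
    using par GS by simp
  have p0: "a mod 2 \<noteq> b mod 2" using parS[of 0] e1 e2 by (simp add: numeral_2_eq_2)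
  have "b \<le> 2*a"
  proof -
    have "enumerate (gen {a,b}) (Suc 1) \<le> 2*a"
      by (rule enum_between[OF infS]) (use mem[of 2 a 0 b] e1 a0 elem_def in auto)
    then show ?thesis using e2 by (simp add: elem_def numeral_2_eq_2)
  qed
  then have b2a': "a \<ge> 2 \<Longrightarrow> b < 2*a"
  proof (cases "b = 2*a")
    case True
    assume "a \<ge> 2"
    then show ?thesis using nodiv[OF nsS, of a] True by simp
  qed simp
  consider "a = 1" | "a = 2" | "a = 3" | "a \<ge> 4" using a0 by linarith
  then show "G = gen {1, 2} \<or> G = gen {2, 3} \<or> G = gen {3, 4}"
  proof cases
    case 1
    have "x \<in> gen {a,b}" for x using mem[of x a 0 b] 1 by simp
    then have "G = UNIV" using GS by blast
    then show ?thesis using G1 by simp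
  next
    case 2 then have b2a: "b < 2*a" using b2a' by simp
    from 2 have "b = 3" using ab b2a by simp
    then show ?thesis using GS 2 by simp
  next
    case 3 then have b2a: "b < 2*a" using b2a' by simp
    from 3 have "b = 4 \<or> b = 5" using ab b2a by auto
    then have "b = 4" using p0 3 by auto
    then show ?thesis using GS 3 by simp
  next
    case 4
    then have b2a: "b < 2*a" using b2a' by simp
    have e3: "elem (gen {a,b}) 3 = 2*a"
      by (rule gen_next[where n=2 and x=b and p=2 and q=0]) (use infS ab b2a 4 e2 in \<open>auto simp: all4\<close>)
    have e4: "elem (gen {a,b}) 4 = a+b"
      by (rule gen_next[where n=3 and x="2*a" and p=1 and q=1]) (use infS ab b2a 4 e3 in \<open>auto simp: all4\<close>)
    show ?thesis
    proof (cases "a mod 2 = 0")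
      case True
      have "2*b \<noteq> 3*a"
      proof
        assume h: "2*b = 3*a"
        have "a = (b-a)*2" "b = (b-a)*3" "b - a \<ge> 2" using h 4 by auto
        then show False using nodiv[OF nsS, of "b-a"] by (metis dvd_triv_left)
      qed
      then consider "2*b < 3*a" | "3*a < 2*b" by linarith
      then show ?thesis
      proof cases
        case 1
        have e5: "elem (gen {a,b}) 5 = 2*b"
          by (rule gen_next[where n=4 and x="a+b" and p=0 and q=2]) (use infS ab b2a 4 e4 1 in \<open>auto simp: all4\<close>)
        have e6: "elem (gen {a,b}) 6 = 3*a"
          by (rule gen_next[where n=5 and x="2*b" and p=3 and q=0]) (use infS ab b2a 4 e5 1 in \<open>auto simp: all4\<close>)
        show ?thesis using parS[of 2] e5 e6 True by (simp; presburger)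
      next
        case 2
        have e5: "elem (gen {a,b}) 5 = 3*a"
          by (rule gen_next[where n=4 and x="a+b" and p=3 and q=0]) (use infS ab b2a 4 e4 2 in \<open>auto simp: all4\<close>)
        have e6: "elem (gen {a,b}) 6 = 2*b"
          by (rule gen_next[where n=5 and x="3*a" and p=0 and q=2]) (use infS ab b2a 4 e5 2 in \<open>auto simp: all4\<close>)
        show ?thesis using parS[of 2] e5 e6 True by (simp; presburger)
      qed
    next
      case False
      then have bev: "b mod 2 = 0" and aod: "a mod 2 = 1" using p0 by presburger+
      have "2*b \<noteq> 3*a" using bev aod by presburger
      then consider "2*b < 3*a" | "3*a < 2*b" by linarith
      then show ?thesis
      proof cases
        case 1
        have e5: "elem (gen {a,b}) 5 = 2*b"
          by (rule gen_next[where n=4 and x="a+b" and p=0 and q=2]) (use infS ab b2a 4 e4 1 in \<open>auto simp: all4\<close>)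
        have e6: "elem (gen {a,b}) 6 = 3*a"
          by (rule gen_next[where n=5 and x="2*b" and p=3 and q=0]) (use infS ab b2a 4 e5 1 in \<open>auto simp: all4\<close>)
        have e7: "elem (gen {a,b}) 7 = 2*a+b"
          by (rule gen_next[where n=6 and x="3*a" and p=2 and q=1]) (use infS ab b2a 4 e6 1 in \<open>auto simp: all4\<close>)
        have e8: "elem (gen {a,b}) 8 = a+2*b"
          by (rule gen_next[where n=7 and x="2*a+b" and p=1 and q=2]) (use infS ab b2a 4 e7 1 in \<open>auto simp: all4\<close>)
        have "4*a \<noteq> 3*b"
        proof
          assume h: "4*a = 3*b"
          have "a = (b-a)*3" "b = (b-a)*4" "b - a \<ge> 2" using h 4 by auto
          then show False using nodiv[OF nsS, of "b-a"] by (metis dvd_triv_left)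
        qed
        then consider "4*a < 3*b" | "3*b < 4*a" by linarith
        then show ?thesis
        proof cases
          case 1
          have e9: "elem (gen {a,b}) 9 = 4*a"
            by (rule gen_next[where n=8 and x="a+2*b" and p=4 and q=0]) (use infS ab b2a 4 e8 \<open>2*b < 3*a\<close> 1 in \<open>auto simp: all4\<close>)
          have e10: "elem (gen {a,b}) 10 = 3*b"
            by (rule gen_next[where n=9 and x="4*a" and p=0 and q=3]) (use infS ab b2a 4 e9 \<open>2*b < 3*a\<close> 1 in \<open>auto simp: all4\<close>)
          show ?thesis using parS[of 4] e9 e10 bev by (simp; presburger)
        next
          case 2
          have e9: "elem (gen {a,b}) 9 = 3*b"
            by (rule gen_next[where n=8 and x="a+2*b" and p=0 and q=3]) (use infS ab b2a 4 e8 \<open>2*b < 3*a\<close> 2 in \<open>auto simp: all4\<close>)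
          have e10: "elem (gen {a,b}) 10 = 4*a"
            by (rule gen_next[where n=9 and x="3*b" and p=4 and q=0]) (use infS ab b2a 4 e9 \<open>2*b < 3*a\<close> 2 in \<open>auto simp: all4\<close>)
          show ?thesis using parS[of 4] e9 e10 bev by (simp; presburger)
        qed
      next
        case 2
        have e5: "elem (gen {a,b}) 5 = 3*a"
          by (rule gen_next[where n=4 and x="a+b" and p=3 and q=0]) (use infS ab b2a 4 e4 2 in \<open>auto simp: all4\<close>)
        have e6: "elem (gen {a,b}) 6 = 2*b"
          by (rule gen_next[where n=5 and x="3*a" and p=0 and q=2]) (use infS ab b2a 4 e5 2 in \<open>auto simp: all4\<close>)
        have e7: "elem (gen {a,b}) 7 = 2*a+b"
          by (rule gen_next[where n=6 and x="2*b" and p=2 and q=1]) (use infS ab b2a 4 e6 2 in \<open>auto simp: all4\<close>)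
        have e8: "elem (gen {a,b}) 8 = 4*a"
          by (rule gen_next[where n=7 and x="2*a+b" and p=4 and q=0]) (use infS ab b2a 4 e7 2 in \<open>auto simp: all4\<close>)
        show ?thesis using parS[of 3] e7 e8 bev by (simp; presburger)
      qed
    qed
  qed
next
  assume "G = gen {1, 2} \<or> G = gen {2, 3} \<or> G = gen {3, 4}"
  then consider "G = gen {1,2}" | "G = gen {2,3}" | "G = gen {3,4}" by blast
  then show "perm_numerical_semigroup 2 G"
  proof cases
    case 1
    then have G: "G = UNIV" using G1 by simp
    have "elem G (k*2+1) mod 2 \<noteq> elem G (k*2+2) mod 2" for k
      using G E1 by simp presburger
    moreover have "elem G 1 = 1" "elem G 2 = 2" using G E1 by simp_all
    ultimately show ?thesis using conv[OF assms, of 1 2] 1 by simp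
  next
    case 2
    then have G: "G = UNIV - {1}" using G2 by simp
    have "elem G 1 = 2" "elem G 2 = 3" using E2[of 0] E2[of 1] G by (simp_all add: numeral_2_eq_2)
    moreover have "elem G (k*2+1) mod 2 \<noteq> elem G (k*2+2) mod 2" for k
      using E2[of "k*2"] E2[of "k*2+1"] G by (simp; presburger)
    ultimately show ?thesis using conv[OF assms, of 2 3] 2 by simp
  next
    case 3
    then have G: "G = UNIV - {1,2,5}" using G3 by simp
    have e1: "elem G 1 = 3" and e2: "elem G 2 = 4" using E3a G by simp_all
    moreover have "elem G (k*2+1) mod 2 \<noteq> elem G (k*2+2) mod 2" for k
    proof (cases k)
      case 0 then have h: "k*2+1 = 1" "k*2+2 = 2" by simp_all
      show ?thesis unfolding h using e1 e2 by simp
    next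
      case (Suc j)
      have h: "k*2+1 = (2*j) + 3" "k*2+2 = (2*j+1) + 3" using Suc by simp_all
      have "(2*j+6) mod 2 \<noteq> (2*j+1+6) mod (2::nat)" by presburger
      then show ?thesis unfolding h G E3 .
    qed
    ultimately show ?thesis using conv[OF assms, of 3 4] 3 by simp
  qed
qed

end
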